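(* Let $\mathcal{T}\in\mathbb{K}^{R\times R\times K}$ be slice mix invertible and let $\mathrm{span}(\boldsymbol{\lambda})$ be a JGE value of $\mathcal{T}$. Let $\mathbf{U}\in\mathbb{K}^{K\times K}$ be invertible and $\mathcal{S}=\mathcal{T}\cdot_3\mathbf{U}$. Then $\mathcal{S}$ is slice mix invertible and $\mathrm{span}(\mathbf{U}\boldsymbol{\lambda})$ is a JGE value of $\mathcal{S}$ whose algebraic multiplicity (as a JGE value of $\mathcal{S}$) equals the algebraic multiplicity of $\mathrm{span}(\boldsymbol{\lambda})$ (as a JGE value of $\mathcal{T}$). Furthermore, if $\mathbf{x}$ is a JGE vector of $\mathcal{T}$ with $(\mathrm{span}(\boldsymbol{\lambda}),\mathbf{x})$ a JGE pair, then $(\mathrm{span}(\mathbf{U}\boldsymbol{\lambda}),\mathbf{x})$ is a JGE pair of $\mathcal{S}$; consequently the geometric multiplicities of $\mathrm{span}(\boldsymbol{\lambda})$ for $\mathcal{T}$ and of $\mathrm{span}(\mathbf{U}\boldsymbol{\lambda})$ for $\mathcal{S}$ are equal.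
   Context: $\mathbb{K}$ denotes $\mathbb{R}$ or $\mathbb{C}$. $\mathcal{S}=\mathcal{T}\cdot_3\mathbf{U}$ has slices $\mathbf{S}_k=\sum_l U_{kl}\mathbf{T}_l$. For $\mathcal{X}$ with slices $\mathbf{X}_k$: slice mix invertible means some linear combination of slices is invertible; a nonzero $\mathbf{x}$ is a JGE vector if $\mathbf{X}_\ell\mathbf{x}=\lambda_\ell\mathbf{y}$ for all $\ell$ for some $\boldsymbol{\lambda}$ and nonzero $\mathbf{y}$, and then $\mathrm{span}(\boldsymbol{\lambda})$ is a JGE value and $(\mathrm{span}(\boldsymbol{\lambda}),\mathbf{x})$ a JGE pair; $p_{\mathcal{X}}(\boldsymbol{\gamma})=\det(\sum_k\gamma_k\mathbf{X}_k)$; the algebraic multiplicity of $\mathrm{span}(\boldsymbol{\lambda})$ is the largest $m$ with $(\sum_k\lambda_k\gamma_k)^m\mid p_{\mathcal{X}}$ (a JGE value may also mean any $\mathrm{span}(\boldsymbol\lambda)$ with positive algebraic multiplicity); the geometric multiplicity is the dimension of the span of JGE vectors paired with it. *)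

theory Defs
  imports "HOL-Analysis.Analysis"
begin

text \<open>Tensors in K^(R x R x K) are represented by their frontal slices:
  a function from a finite index type 'k (the K slices) to R x R matrices.\<close>

definition slice_mix :: "('k::finite \<Rightarrow> 'a::comm_ring_1^'r^'r) \<Rightarrow> 'a^'k \<Rightarrow> 'a^'r^'r" where
  "slice_mix X \<gamma> = (\<chi> i j. \<Sum>k\<in>UNIV. \<gamma>$k * (X k)$i$j)"

definition slice_mix_invertible :: "('k::finite \<Rightarrow> 'a::comm_ring_1^'r^'r) \<Rightarrow> bool" where
  "slice_mix_invertible X \<longleftrightarrow> (\<exists>\<gamma>. invertible (slice_mix X \<gamma>))"

definition mode3 :: "('k::finite \<Rightarrow> 'a::comm_ring_1^'r^'r) \<Rightarrow> 'a^'k^'k \<Rightarrow> ('k \<Rightarrow> 'a^'r^'r)" where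
  "mode3 X U = (\<lambda>k. \<chi> i j. \<Sum>l\<in>UNIV. U$k$l * (X l)$i$j)"

definition jge_pair :: "('k::finite \<Rightarrow> 'a::field^'r^'r) \<Rightarrow> ('a^'k) set \<Rightarrow> 'a^'r \<Rightarrow> bool" where
  "jge_pair X \<Lambda> x \<longleftrightarrow> x \<noteq> 0 \<and>
     (\<exists>lam y. \<Lambda> = vec.span {lam} \<and> y \<noteq> 0 \<and> (\<forall>l. X l *v x = lam$l *s y))"

definition jge_vector :: "('k::finite \<Rightarrow> 'a::field^'r^'r) \<Rightarrow> 'a^'r \<Rightarrow> bool" where
  "jge_vector X x \<longleftrightarrow> (\<exists>\<Lambda>. jge_pair X \<Lambda> x)"

definition jge_value :: "('k::finite \<Rightarrow> 'a::field^'r^'r) \<Rightarrow> ('a^'k) set \<Rightarrow> bool" where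
  "jge_value X \<Lambda> \<longleftrightarrow> (\<exists>x. jge_pair X \<Lambda> x)"

text \<open>Polynomial functions in the variables gamma_k (over an infinite field these are
  exactly multivariate polynomials).\<close>
inductive poly_fun :: "('a::comm_ring_1^'k \<Rightarrow> 'a) \<Rightarrow> bool" where
  pf_const: "poly_fun (\<lambda>\<gamma>. c)"
| pf_var: "poly_fun (\<lambda>\<gamma>. \<gamma>$k)"
| pf_add: "poly_fun f \<Longrightarrow> poly_fun g \<Longrightarrow> poly_fun (\<lambda>\<gamma>. f \<gamma> + g \<gamma>)"
| pf_mult: "poly_fun f \<Longrightarrow> poly_fun g \<Longrightarrow> poly_fun (\<lambda>\<gamma>. f \<gamma> * g \<gamma>)"

definition poly_dvd :: "('a::comm_ring_1^'k \<Rightarrow> 'a) \<Rightarrow> ('a^'k \<Rightarrow> 'a) \<Rightarrow> bool" where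
  "poly_dvd f g \<longleftrightarrow> (\<exists>q. poly_fun q \<and> (\<forall>\<gamma>. g \<gamma> = f \<gamma> * q \<gamma>))"

definition char_poly :: "('k::finite \<Rightarrow> 'a::comm_ring_1^'r^'r) \<Rightarrow> 'a^'k \<Rightarrow> 'a" where
  "char_poly X \<gamma> = det (slice_mix X \<gamma>)"

definition alg_mult :: "('k::finite \<Rightarrow> 'a::field^'r^'r) \<Rightarrow> ('a^'k) set \<Rightarrow> nat" where
  "alg_mult X \<Lambda> = (GREATEST m. \<exists>lam. \<Lambda> = vec.span {lam} \<and>
      poly_dvd (\<lambda>\<gamma>. (\<Sum>k\<in>UNIV. lam$k * \<gamma>$k) ^ m) (char_poly X))"

definition geom_mult :: "('k::finite \<Rightarrow> 'a::field^'r^'r) \<Rightarrow> ('a^'k) set \<Rightarrow> nat" where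
  "geom_mult X \<Lambda> = vec.dim (vec.span {x. jge_pair X \<Lambda> x})"

end

theory Submission
  imports Defs
begin

lemma poly_fun_sum:
  assumes "finite S" "\<And>i. i \<in> S \<Longrightarrow> poly_fun (f i)"
  shows "poly_fun (\<lambda>\<gamma>. \<Sum>i\<in>S. f i \<gamma>)"
  using assms
proof (induction S rule: finite_induct)
  case empty
  then show ?case using pf_const[of 0] by simp
next
  case (insert x F)
  then show ?case by (simp add: pf_add)
qed

lemma poly_fun_comp:
  fixes A :: "'a::comm_ring_1^'k::finite^'k"
  assumes "poly_fun q"
  shows "poly_fun (\<lambda>\<gamma>. q (A *v \<gamma>))"
  using assms
proof (induction rule: poly_fun.induct)
  case (pf_const c)
  then show ?case by (rule poly_fun.pf_const)
next
  case (pf_var k)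
  have "poly_fun (\<lambda>\<gamma>. \<Sum>j\<in>UNIV. A$k$j * \<gamma>$j)"
    by (rule poly_fun_sum) (auto intro: poly_fun.pf_mult poly_fun.pf_const poly_fun.pf_var)
  then show ?case by (simp add: matrix_vector_mult_def)
next
  case (pf_add f g)
  then show ?case by (simp add: poly_fun.pf_add)
next
  case (pf_mult f g)
  then show ?case by (simp add: poly_fun.pf_mult)
qed

lemma poly_dvd_comp:
  fixes A :: "'a::comm_ring_1^'k::finite^'k"
  assumes "poly_dvd f g"
  shows "poly_dvd (\<lambda>\<gamma>. f (A *v \<gamma>)) (\<lambda>\<gamma>. g (A *v \<gamma>))"
  using assms poly_fun_comp unfolding poly_dvd_def by blast

lemma dswap:
  fixes a :: "'k::finite \<Rightarrow> 'a::comm_semiring_1"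
  shows "(\<Sum>k\<in>UNIV. a k * (\<Sum>l\<in>UNIV. b k l * c l)) = (\<Sum>l\<in>(UNIV::'l::finite set). (\<Sum>k\<in>UNIV. b k l * a k) * c l)"
  unfolding sum_distrib_left sum_distrib_right
  by (subst sum.swap) (simp add: mult_ac)

lemma slice_mix_mode3:
  "slice_mix (mode3 X U) \<gamma> = slice_mix X (transpose U *v \<gamma>)"
  unfolding slice_mix_def mode3_def
  by (simp add: vec_eq_iff matrix_vector_mult_def transpose_def dswap)

lemma char_poly_mode3:
  "char_poly (mode3 X U) \<gamma> = char_poly X (transpose U *v \<gamma>)"
  unfolding char_poly_def slice_mix_mode3 ..

lemma lin_transpose:
  fixes U :: "'a::comm_ring_1^'k::finite^'k"
  shows "(\<Sum>k\<in>UNIV. lam$k * (transpose U *v \<gamma>)$k) = (\<Sum>k\<in>UNIV. (U *v lam)$k * \<gamma>$k)"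
proof -
  have "(\<Sum>k\<in>UNIV. lam$k * (transpose U *v \<gamma>)$k) = (\<Sum>k\<in>UNIV. \<Sum>j\<in>UNIV. lam$k * (U$j$k * \<gamma>$j))"
    by (simp add: matrix_vector_mult_def transpose_def sum_distrib_left)
  also have "\<dots> = (\<Sum>j\<in>UNIV. \<Sum>k\<in>UNIV. lam$k * (U$j$k * \<gamma>$j))"
    by (rule sum.swap)
  also have "\<dots> = (\<Sum>k\<in>UNIV. (U *v lam)$k * \<gamma>$k)"
    by (simp add: matrix_vector_mult_def sum_distrib_right sum_distrib_left mult_ac)
  finally show ?thesis .
qed

lemma mode3_mode3:
  fixes X :: "'k::finite \<Rightarrow> 'a::comm_ring_1^'r^'r"
  shows "mode3 (mode3 X U) V = mode3 X (V ** U)"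
proof (rule ext)
  fix k :: 'k
  have e: "(\<Sum>l\<in>UNIV. V$k$l * (\<Sum>m\<in>UNIV. U$l$m * X m$i$j)) = (\<Sum>m\<in>UNIV. (V**U)$k$m * X m$i$j)" for i j
  proof -
    have "(\<Sum>l\<in>UNIV. V$k$l * (\<Sum>m\<in>UNIV. U$l$m * X m$i$j)) = (\<Sum>m\<in>UNIV. (\<Sum>l\<in>UNIV. U$l$m * V$k$l) * X m$i$j)"
      by (rule dswap)
    also have "\<dots> = (\<Sum>m\<in>UNIV. (V**U)$k$m * X m$i$j)"
      unfolding matrix_matrix_mult_def by (simp add: mult.commute)
    finally show ?thesis .
  qed
  show "mode3 (mode3 X U) V k = mode3 X (V ** U) k"
    unfolding mode3_def by (simp add: vec_eq_iff e)
qed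

lemma mode3_id:
  fixes X :: "'k::finite \<Rightarrow> 'a::comm_ring_1^'r^'r"
  shows "mode3 X (mat 1) = X"
proof (rule ext)
  fix k :: 'k
  have "\<And>l x. (if k = l then 1 else 0) * (x::'a) = (if k = l then x else 0)" by simp
  then show "mode3 X (mat 1) k = X k"
    unfolding mode3_def by (simp add: vec_eq_iff mat_def)
qed

lemma span_img:
  fixes U :: "'a::field^'k::finite^'k"
  shows "vec.span {U *v a} = (\<lambda>v. U *v v) ` vec.span {a}"
  by (simp only: vec.span_singleton image_image vector_scalar_commute)

lemma span_img_eq:
  fixes U :: "'a::field^'k::finite^'k"
  assumes "vec.span {a} = vec.span {b}"
  shows "vec.span {U *v a} = vec.span {U *v b}"
  using assms by (simp add: span_img)

lemma mode3_mulv: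
  "mode3 X U k *v x = (\<Sum>l\<in>UNIV. U$k$l *s (X l *v x))"
proof -
  have "(\<Sum>j\<in>UNIV. (\<Sum>l\<in>UNIV. U$k$l * X l$i$j) * x$j) = (\<Sum>l\<in>UNIV. U$k$l * (\<Sum>j\<in>UNIV. X l$i$j * x$j))" for i
  proof -
    have "(\<Sum>j\<in>UNIV. (\<Sum>l\<in>UNIV. U$k$l * X l$i$j) * x$j) = (\<Sum>j\<in>UNIV. \<Sum>l\<in>UNIV. U$k$l * (X l$i$j * x$j))"
      by (simp add: sum_distrib_right sum_distrib_left mult_ac)
    also have "\<dots> = (\<Sum>l\<in>UNIV. \<Sum>j\<in>UNIV. U$k$l * (X l$i$j * x$j))"
      by (rule sum.swap)
    also have "\<dots> = (\<Sum>l\<in>UNIV. U$k$l * (\<Sum>j\<in>UNIV. X l$i$j * x$j))"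
      by (simp add: sum_distrib_left)
    finally show ?thesis .
  qed
  then show ?thesis
    unfolding mode3_def by (simp add: vec_eq_iff matrix_vector_mult_def sum_component)
qed

lemma jge_pair_mode3:
  fixes X :: "'k::finite \<Rightarrow> 'a::field^'r^'r"
  assumes "jge_pair X (vec.span {a}) x"
  shows "jge_pair (mode3 X U) (vec.span {U *v a}) x"
proof -
  obtain lam y where h: "x \<noteq> 0" "vec.span {a} = vec.span {lam}" "y \<noteq> 0"
    "\<And>l. X l *v x = lam$l *s y"
    using assms unfolding jge_pair_def by blast
  have "mode3 X U k *v x = (U *v lam)$k *s y" for k
  proof -
    have "mode3 X U k *v x = (\<Sum>l\<in>UNIV. U$k$l *s (lam$l *s y))"
      by (simp only: mode3_mulv h(4))
    also have "\<dots> = (U *v lam)$k *s y"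
      by (simp add: vec_eq_iff sum_component matrix_vector_mult_def sum_distrib_right sum_distrib_left mult_ac)
    finally show ?thesis .
  qed
  moreover have "vec.span {U *v a} = vec.span {U *v lam}"
    using span_img_eq[OF h(2)] .
  ultimately show ?thesis unfolding jge_pair_def using h by blast
qed

lemma alg_pred_mode3:
  fixes X :: "'k::finite \<Rightarrow> 'a::field^'r^'r"
  assumes "\<exists>lam. vec.span {a} = vec.span {lam} \<and>
      poly_dvd (\<lambda>\<gamma>. (\<Sum>k\<in>UNIV. lam$k * \<gamma>$k) ^ m) (char_poly X)"
  shows "\<exists>lam. vec.span {U *v a} = vec.span {lam} \<and>
      poly_dvd (\<lambda>\<gamma>. (\<Sum>k\<in>UNIV. lam$k * \<gamma>$k) ^ m) (char_poly (mode3 X U))"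
proof -
  obtain lam where h: "vec.span {a} = vec.span {lam}"
    "poly_dvd (\<lambda>\<gamma>. (\<Sum>k\<in>UNIV. lam$k * \<gamma>$k) ^ m) (char_poly X)"
    using assms by blast
  have cp: "char_poly (mode3 X U) = (\<lambda>\<gamma>. char_poly X (transpose U *v \<gamma>))"
    by (rule ext) (rule char_poly_mode3)
  have "poly_dvd (\<lambda>\<gamma>. (\<Sum>k\<in>UNIV. (U *v lam)$k * \<gamma>$k) ^ m) (char_poly (mode3 X U))"
    using poly_dvd_comp[OF h(2), of "transpose U"] by (simp only: cp lin_transpose)
  then show ?thesis using span_img_eq[OF h(1)] by blast
qed

theorem lemma5p2:
  fixes T :: "'k::finite \<Rightarrow> 'a::field_char_0^'r^'r"
    and U :: "'a^'k^'k" and lam :: "'a^'k"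
  assumes "slice_mix_invertible T"
    and "jge_value T (vec.span {lam})"
    and "invertible U"
  shows "slice_mix_invertible (mode3 T U)
    \<and> jge_value (mode3 T U) (vec.span {U *v lam})
    \<and> alg_mult (mode3 T U) (vec.span {U *v lam}) = alg_mult T (vec.span {lam})
    \<and> (\<forall>x. jge_pair T (vec.span {lam}) x \<longrightarrow> jge_pair (mode3 T U) (vec.span {U *v lam}) x)
    \<and> geom_mult (mode3 T U) (vec.span {U *v lam}) = geom_mult T (vec.span {lam})"
proof -
  obtain V where V: "U ** V = mat 1" "V ** U = mat 1"
    using assms(3) unfolding invertible_def by blast
  have bck: "mode3 (mode3 T U) V = T"
    by (simp add: mode3_mode3 V mode3_id)
  have bckv: "V *v (U *v lam) = lam"
    by (simp add: matrix_vector_mul_assoc V)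
  have smi: "slice_mix_invertible (mode3 T U)"
  proof -
    obtain g where g: "invertible (slice_mix T g)"
      using assms(1) unfolding slice_mix_invertible_def by blast
    have "transpose U *v (transpose V *v g) = transpose (V ** U) *v g"
      by (simp only: matrix_vector_mul_assoc matrix_transpose_mul)
    also have "\<dots> = g" by (simp add: V transpose_mat)
    finally have "transpose U *v (transpose V *v g) = g" .
    then have "slice_mix (mode3 T U) (transpose V *v g) = slice_mix T g"
      by (simp add: slice_mix_mode3)
    then show ?thesis unfolding slice_mix_invertible_def using g by metis
  qed
  have pairs: "jge_pair (mode3 T U) (vec.span {U *v lam}) x \<longleftrightarrow> jge_pair T (vec.span {lam}) x" for x
    using jge_pair_mode3[of T lam x U] jge_pair_mode3[of "mode3 T U" "U *v lam" x V]
    by (auto simp: bck bckv)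
  have algs: "(\<exists>l. vec.span {U *v lam} = vec.span {l} \<and>
      poly_dvd (\<lambda>\<gamma>. (\<Sum>k\<in>UNIV. l$k * \<gamma>$k) ^ m) (char_poly (mode3 T U))) \<longleftrightarrow>
      (\<exists>l. vec.span {lam} = vec.span {l} \<and>
      poly_dvd (\<lambda>\<gamma>. (\<Sum>k\<in>UNIV. l$k * \<gamma>$k) ^ m) (char_poly T))" for m
    using alg_pred_mode3[of lam m T U] alg_pred_mode3[of "U *v lam" m "mode3 T U" V]
    by (auto simp: bck bckv)
  have pairsf: "jge_pair (mode3 T U) (vec.span {U *v lam}) = jge_pair T (vec.span {lam})"
    by (rule ext) (rule pairs)
  show ?thesis
    using smi pairsf assms(2)
    unfolding jge_value_def alg_mult_def geom_mult_def algs
    by simp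
qed

end
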